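(* Let $N\ge 1$, $p\ge 1$ and $\varepsilon>0$. For $i=1,\dots,N$ let $f_i:\mathbb R^p\to\mathbb R$ be convex and smooth and $g_i:\mathbb R^p\to\mathbb R$ be convex (possibly non-smooth), and suppose $F_i=f_i+g_i$ is Lipschitz continuous with Lipschitz constant $L_i$, i.e. $|F_i(y)-F_i(z)|\le L_i\|y-z\|$ for all $y,z\in\mathbb R^p$. Let $x^\ast$ be an optimal solution of $$\text{minimize}_{x\in\mathbb R^p}\ \frac1N\sum_{i=1}^N F_i(x),$$ and let $(x^\ast_{\mathrm{rel}},x^{1,\ast},\dots,x^{N,\ast})$ be an optimal solution of the relaxed problem $$\text{minimize}_{x,x^1,\dots,x^N\in\mathbb R^p}\ \frac1N\sum_{i=1}^N F_i(x^i)\quad\text{subject to}\quad \|x-x^i\|^2\le\varepsilon^2,\ i=1,\dots,N.$$ Then, with $L=\sum_{i=1}^N L_i$, $$\frac1N\sum_{i=1}^N\bigl(F_i(x^\ast_{\mathrm{rel}})-F_i(x^\ast)\bigr)\le \frac{\varepsilon}{N}L.$$ Furthermore, if the cost function $\frac1N\sum_{i=1}^N F_i$ is strongly convex with modulus $m>0$, then $$\|x^\ast_{\mathrm{rel}}-x^\ast\|^2\le \frac{2\varepsilon L}{Nm}.$$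
   Context: $\|\cdot\|$ denotes the Euclidean norm on $\mathbb R^p$. Strong convexity with modulus $m$ of a function $\phi$ means $\phi(y)\ge\phi(z)+g^T(y-z)+\frac m2\|y-z\|^2$ for all $y,z$ and all subgradients $g$ of $\phi$ at $z$. *)

theory Defs
  imports "HOL-Analysis.Analysis"
begin

definition is_subgradient :: "('a::real_inner \<Rightarrow> real) \<Rightarrow> 'a \<Rightarrow> 'a \<Rightarrow> bool" where
  "is_subgradient \<phi> z g \<longleftrightarrow> (\<forall>y. \<phi> y \<ge> \<phi> z + inner g (y - z))"

definition strongly_convex_mod :: "real \<Rightarrow> ('a::real_inner \<Rightarrow> real) \<Rightarrow> bool" where
  "strongly_convex_mod m \<phi> \<longleftrightarrow>
     (\<forall>y z g. is_subgradient \<phi> z g \<longrightarrow> \<phi> y \<ge> \<phi> z + inner g (y - z) + m / 2 * (norm (y - z))\<^sup>2)"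

end

theory Submission
  imports Defs
begin

theorem theorem1:
  fixes N :: nat and \<epsilon> :: real
    and f g :: "nat \<Rightarrow> 'a::euclidean_space \<Rightarrow> real"
    and L :: "nat \<Rightarrow> real"
    and xstar xrel :: 'a and xs :: "nat \<Rightarrow> 'a"
  assumes N: "N \<ge> 1" and eps: "\<epsilon> > 0"
    and f_convex: "\<And>i. i \<in> {1..N} \<Longrightarrow> convex_on UNIV (f i)"
    and f_smooth: "\<And>i x. i \<in> {1..N} \<Longrightarrow> f i differentiable (at x)"
    and g_convex: "\<And>i. i \<in> {1..N} \<Longrightarrow> convex_on UNIV (g i)"
    and lip: "\<And>i y z. i \<in> {1..N} \<Longrightarrow>
               \<bar>(f i y + g i y) - (f i z + g i z)\<bar> \<le> L i * norm (y - z)"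
    and opt: "\<And>x. (1 / real N) * (\<Sum>i=1..N. f i xstar + g i xstar)
                    \<le> (1 / real N) * (\<Sum>i=1..N. f i x + g i x)"
    and rel_feas: "\<And>i. i \<in> {1..N} \<Longrightarrow> (norm (xrel - xs i))\<^sup>2 \<le> \<epsilon>\<^sup>2"
    and rel_opt: "\<And>y ys. (\<forall>i\<in>{1..N}. (norm (y - ys i))\<^sup>2 \<le> \<epsilon>\<^sup>2) \<Longrightarrow>
               (1 / real N) * (\<Sum>i=1..N. f i (xs i) + g i (xs i))
                 \<le> (1 / real N) * (\<Sum>i=1..N. f i (ys i) + g i (ys i))"
  shows "(1 / real N) * (\<Sum>i=1..N. (f i xrel + g i xrel) - (f i xstar + g i xstar))
           \<le> \<epsilon> / real N * (\<Sum>i=1..N. L i)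
         \<and> (\<forall>m>0. strongly_convex_mod m (\<lambda>x. (1 / real N) * (\<Sum>i=1..N. f i x + g i x)) \<longrightarrow>
              (norm (xrel - xstar))\<^sup>2 \<le> 2 * \<epsilon> * (\<Sum>i=1..N. L i) / (real N * m))"
proof -
  define F where "F = (\<lambda>i x. f i x + g i x)"
  have Lnn: "L i \<ge> 0" if i: "i \<in> {1..N}" for i
  proof -
    obtain b :: 'a where b: "b \<in> Basis" using nonempty_Basis by blast
    have nb: "norm b = 1" using b by simp
    have "\<bar>F i b - F i 0\<bar> \<le> L i * norm (b - 0)" using lip[OF i, of b 0] unfolding F_def by simp
    hence "\<bar>F i b - F i 0\<bar> \<le> L i" using nb by (metis diff_zero mult.right_neutral)
    thus ?thesis using abs_ge_zero[of "F i b - F i 0"] by linarith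
  qed
  have step: "F i xrel \<le> F i (xs i) + L i * \<epsilon>" if i: "i \<in> {1..N}" for i
  proof -
    have "norm (xrel - xs i) \<le> \<epsilon>" using power2_le_imp_le[OF rel_feas[OF i]] eps by simp
    hence "L i * norm (xrel - xs i) \<le> L i * \<epsilon>" using Lnn[OF i] by (rule mult_left_mono)
    moreover have "\<bar>F i xrel - F i (xs i)\<bar> \<le> L i * norm (xrel - xs i)" using lip[OF i, of xrel "xs i"] unfolding F_def by simp
    ultimately show ?thesis by linarith
  qed
  have Npos: "real N > 0" using N by simp
  have r: "(1 / real N) * (\<Sum>i=1..N. F i (xs i)) \<le> (1 / real N) * (\<Sum>i=1..N. F i xstar)"
    using rel_opt[of xstar "\<lambda>_. xstar"] eps unfolding F_def by simp
  hence r2: "(\<Sum>i=1..N. F i (xs i)) \<le> (\<Sum>i=1..N. F i xstar)" using Npos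
    by (simp add: divide_le_cancel)
  have s1: "(\<Sum>i=1..N. F i xrel) \<le> (\<Sum>i=1..N. F i (xs i) + L i * \<epsilon>)"
    by (rule sum_mono) (use step in auto)
  have s2: "(\<Sum>i=1..N. F i xrel - F i xstar) \<le> \<epsilon> * (\<Sum>i=1..N. L i)"
    using s1 r2 by (simp add: sum.distrib sum_subtractf sum_distrib_left mult.commute)
  have part1: "(1 / real N) * (\<Sum>i=1..N. F i xrel - F i xstar) \<le> \<epsilon> / real N * (\<Sum>i=1..N. L i)"
    using s2 Npos by (simp add: divide_right_mono)
  show ?thesis
  proof (intro conjI allI impI)
    show "(1 / real N) * (\<Sum>i=1..N. (f i xrel + g i xrel) - (f i xstar + g i xstar))
           \<le> \<epsilon> / real N * (\<Sum>i=1..N. L i)" using part1 unfolding F_def .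
  next
    fix m :: real assume m: "m > 0"
      and sc: "strongly_convex_mod m (\<lambda>x. (1 / real N) * (\<Sum>i=1..N. f i x + g i x))"
    define \<Phi> where "\<Phi> = (\<lambda>x. (1 / real N) * (\<Sum>i=1..N. f i x + g i x))"
    have sg: "is_subgradient \<Phi> xstar 0" unfolding is_subgradient_def \<Phi>_def using opt by simp
    have "\<Phi> xrel \<ge> \<Phi> xstar + m / 2 * (norm (xrel - xstar))\<^sup>2"
      using sc sg unfolding strongly_convex_mod_def \<Phi>_def by force
    moreover have "\<Phi> xrel - \<Phi> xstar \<le> \<epsilon> / real N * (\<Sum>i=1..N. L i)"
      using part1 unfolding \<Phi>_def F_def by (simp add: sum_subtractf right_diff_distrib)
    ultimately have "m / 2 * (norm (xrel - xstar))\<^sup>2 \<le> \<epsilon> / real N * (\<Sum>i=1..N. L i)" by linarith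
    thus "(norm (xrel - xstar))\<^sup>2 \<le> 2 * \<epsilon> * (\<Sum>i=1..N. L i) / (real N * m)"
      using m Npos by (simp add: field_simps)
  qed
qed

end
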